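(* Suppose that the family of vectors $\{\varphi_i\}_{i=1}^M$ does norm retrieval in $\mathbb{R}^N$. Then for every $j\in\{1,\dots,M\}$, if $\varphi_j\notin\mathrm{span}\{\varphi_i: i\neq j\}$, then $\varphi_j$ is orthogonal to $\varphi_i$ for all $i\neq j$. Consequently, a basis of $\mathbb{R}^N$ does norm retrieval in $\mathbb{R}^N$ if and only if it is an orthogonal basis.
   Context: A family of vectors $\{\varphi_i\}_{i=1}^M$ in $\mathbb{R}^N$ does norm retrieval if for all $x,y\in\mathbb{R}^N$, $|\langle x,\varphi_i\rangle|=|\langle y,\varphi_i\rangle|$ for all $i$ implies $\|x\|=\|y\|$. *)

theory Defs
  imports "HOL-Analysis.Analysis"
begin

definition norm_retrieval :: "(nat \<Rightarrow> real ^ 'n) \<Rightarrow> nat \<Rightarrow> bool" where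
  "norm_retrieval phi M \<longleftrightarrow>
     (\<forall>x y. (\<forall>i\<in>{1..M}. \<bar>x \<bullet> phi i\<bar> = \<bar>y \<bullet> phi i\<bar>) \<longrightarrow> norm x = norm y)"

definition is_basis_family :: "(nat \<Rightarrow> real ^ 'n) \<Rightarrow> nat \<Rightarrow> bool" where
  "is_basis_family phi M \<longleftrightarrow>
     inj_on phi {1..M} \<and> independent (phi ` {1..M}) \<and> span (phi ` {1..M}) = UNIV"

definition orthogonal_family :: "(nat \<Rightarrow> real ^ 'n) \<Rightarrow> nat \<Rightarrow> bool" where
  "orthogonal_family phi M \<longleftrightarrow>
     (\<forall>i\<in>{1..M}. \<forall>j\<in>{1..M}. i \<noteq> j \<longrightarrow> orthogonal (phi i) (phi j))"

end

theory Submission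
  imports Defs
begin

lemma part1:
  fixes phi :: "nat \<Rightarrow> real ^ 'n" and M :: nat
  assumes nr: "norm_retrieval phi M" and j: "j \<in> {1..M}"
    and ns: "phi j \<notin> span (phi ` ({1..M} - {j}))"
    and i: "i \<in> {1..M} - {j}"
  shows "orthogonal (phi j) (phi i)"
proof -
  let ?W = "phi ` ({1..M} - {j})"
  obtain y z where y: "y \<in> span ?W" and z: "\<And>w. w \<in> span ?W \<Longrightarrow> orthogonal z w"
    and yz: "phi j = y + z"
    using orthogonal_subspace_decomp_exists[of ?W "phi j"] by blast
  have zy: "z \<bullet> y = 0" using z[OF y] by (simp add: orthogonal_def)
  have zne: "z \<noteq> 0" using ns y yz by auto
  have zz: "z \<bullet> z > 0" using zne by simp
  define r where "r = (y \<bullet> y) / (z \<bullet> z)"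
  have r0: "r \<ge> 0" unfolding r_def using zz by simp
  have ryy: "y \<bullet> y = r * (z \<bullet> z)" unfolding r_def using zz by simp
  define x' where "x' = y - (1 + 2*r) *\<^sub>R z"
  have "\<bar>(phi j) \<bullet> phi k\<bar> = \<bar>x' \<bullet> phi k\<bar>" if k: "k \<in> {1..M}" for k
  proof (cases "k = j")
    case True
    have "x' \<bullet> phi j = y \<bullet> y - (1+2*r) * (z \<bullet> z)"
      unfolding x'_def yz using zy by (simp add: algebra_simps inner_commute)
    also have "\<dots> = - ((y+z) \<bullet> (y+z))" using ryy zy by (simp add: algebra_simps inner_commute)
    finally show ?thesis using True yz by simp
  next
    case False
    have "phi k \<in> span ?W" using k False by (intro span_base) auto
    then have "z \<bullet> phi k = 0" using z by (simp add: orthogonal_def)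
    then show ?thesis unfolding x'_def yz by (simp add: algebra_simps)
  qed
  then have "norm (phi j) = norm x'" using nr unfolding norm_retrieval_def by blast
  then have "(phi j) \<bullet> (phi j) = x' \<bullet> x'" by (simp add: power2_norm_eq_inner[symmetric])
  moreover have "(phi j) \<bullet> (phi j) = y \<bullet> y + z \<bullet> z" unfolding yz using zy
    by (simp add: algebra_simps inner_commute)
  moreover have "x' \<bullet> x' = y \<bullet> y + (1+2*r)^2 * (z \<bullet> z)" unfolding x'_def using zy
    by (simp add: algebra_simps inner_commute power2_eq_square)
  ultimately have "(1+2*r)^2 * (z \<bullet> z) = 1 * (z \<bullet> z)" by simp
  then have "(1+2*r)^2 = 1" using zz by simp
  then have "4 * (r * (1 + r)) = 0" by (simp add: power2_eq_square algebra_simps)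
  then have "r * (1 + r) = 0" by simp
  then have "r = 0" using r0 by auto
  then have "y = 0" using ryy by simp
  moreover have "phi i \<in> span ?W" using i by (intro span_base) auto
  ultimately show ?thesis using z yz by simp
qed

lemma part2:
  fixes phi :: "nat \<Rightarrow> real ^ 'n" and M :: nat
  assumes b: "is_basis_family phi M" and o: "orthogonal_family phi M"
  shows "norm_retrieval phi M"
proof -
  have inj: "inj_on phi {1..M}" and ind: "independent (phi ` {1..M})"
    and sp: "span (phi ` {1..M}) = UNIV" using b unfolding is_basis_family_def by auto
  have nz: "phi k \<noteq> 0" if "k \<in> {1..M}" for k
  proof
    assume "phi k = 0"
    then have "0 \<in> phi ` {1..M}" by (rule image_eqI[OF sym that])
    then have "dependent (phi ` {1..M})" by (rule dependent_zero)
    then show False using ind by simp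
  qed
  have key: "x \<bullet> x = (\<Sum>i\<in>{1..M}. (x \<bullet> phi i)^2 / (phi i \<bullet> phi i))" for x
  proof -
    define p where "p = (\<Sum>i\<in>{1..M}. ((x \<bullet> phi i) / (phi i \<bullet> phi i)) *\<^sub>R phi i)"
    have "(x - p) \<bullet> phi k = 0" if k: "k \<in> {1..M}" for k
    proof -
      have "p \<bullet> phi k = (\<Sum>i\<in>{1..M}. ((x \<bullet> phi i) / (phi i \<bullet> phi i)) * (phi i \<bullet> phi k))"
        unfolding p_def by (simp add: inner_sum_left)
      also have "\<dots> = (\<Sum>i\<in>{1..M}. if i = k then x \<bullet> phi k else 0)"
      proof (rule sum.cong)
        fix i assume i: "i \<in> {1..M}"
        show "((x \<bullet> phi i) / (phi i \<bullet> phi i)) * (phi i \<bullet> phi k) = (if i = k then x \<bullet> phi k else 0)"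
          using o i k nz[OF k] unfolding orthogonal_family_def orthogonal_def by auto
      qed simp
      also have "\<dots> = x \<bullet> phi k" using k by simp
      finally show ?thesis by (simp add: inner_diff_left)
    qed
    then have "orthogonal (x - p) w" if "w \<in> span (phi ` {1..M})" for w
    proof -
      have "orthogonal (x - p) v" if "v \<in> phi ` {1..M}" for v
        using that \<open>\<And>k. k \<in> {1..M} \<Longrightarrow> (x - p) \<bullet> phi k = 0\<close>
        unfolding orthogonal_def by blast
      then show ?thesis using orthogonal_to_span[OF that] by blast
    qed
    then have "orthogonal (x - p) (x - p)" using sp by auto
    then have "x = p" by (simp add: orthogonal_def)
    then have "x \<bullet> x = x \<bullet> p" by simp
    also have "\<dots> = (\<Sum>i\<in>{1..M}. (x \<bullet> phi i)^2 / (phi i \<bullet> phi i))"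
      unfolding p_def by (simp add: inner_sum_right power2_eq_square)
    finally show ?thesis .
  qed
  show ?thesis unfolding norm_retrieval_def
  proof (intro allI impI)
    fix x y :: "real ^ 'n"
    assume h: "\<forall>i\<in>{1..M}. \<bar>x \<bullet> phi i\<bar> = \<bar>y \<bullet> phi i\<bar>"
    have "(x \<bullet> phi i)^2 = (y \<bullet> phi i)^2" if "i \<in> {1..M}" for i
      using h that by (metis power2_abs)
    then have "(\<Sum>i\<in>{1..M}. (x \<bullet> phi i)^2 / (phi i \<bullet> phi i))
        = (\<Sum>i\<in>{1..M}. (y \<bullet> phi i)^2 / (phi i \<bullet> phi i))" by (intro sum.cong) auto
    then have "x \<bullet> x = y \<bullet> y" using key[of x] key[of y] by linarith
    then show "norm x = norm y" by (simp add: norm_eq_sqrt_inner)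
  qed
qed

theorem mainTheorem7:
  fixes phi :: "nat \<Rightarrow> real ^ 'n" and M :: nat
  shows "(norm_retrieval phi M \<longrightarrow>
           (\<forall>j\<in>{1..M}. phi j \<notin> span (phi ` ({1..M} - {j})) \<longrightarrow>
             (\<forall>i\<in>{1..M} - {j}. orthogonal (phi j) (phi i))))
       \<and> (is_basis_family phi M \<longrightarrow> (norm_retrieval phi M \<longleftrightarrow> orthogonal_family phi M))"
proof (intro conjI impI)
  show "norm_retrieval phi M \<Longrightarrow> \<forall>j\<in>{1..M}. phi j \<notin> span (phi ` ({1..M} - {j})) \<longrightarrow>
             (\<forall>i\<in>{1..M} - {j}. orthogonal (phi j) (phi i))"
    using part1 by blast
next
  assume b: "is_basis_family phi M"
  have inj: "inj_on phi {1..M}" and ind: "independent (phi ` {1..M})"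
    using b unfolding is_basis_family_def by auto
  show "norm_retrieval phi M \<longleftrightarrow> orthogonal_family phi M"
  proof
    assume nr: "norm_retrieval phi M"
    have ns: "phi j \<notin> span (phi ` ({1..M} - {j}))" if j: "j \<in> {1..M}" for j
    proof -
      have "phi ` ({1..M} - {j}) = phi ` {1..M} - {phi j}"
        using inj_on_image_set_diff[OF inj, of "{1..M}" "{j}"] j by simp
      moreover have "phi j \<in> phi ` {1..M}" using j by (rule imageI)
      moreover have "\<not> (\<exists>a\<in>phi ` {1..M}. a \<in> span (phi ` {1..M} - {a}))"
        using ind by (simp only: dependent_def not_False_eq_True)
      ultimately show ?thesis by metis
    qed
    show "orthogonal_family phi M" unfolding orthogonal_family_def
      using part1[OF nr _ ns] by blast
  next
    assume "orthogonal_family phi M"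
    then show "norm_retrieval phi M" using part2 b by blast
  qed
qed

end
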